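(* Let $n\geq 0$, $N\geq n$ and $k\geq 1$ be integers with $N+2>2(n+1)k$. Let $x_j=\cos\!\big((N+1-j)\pi/(N+2)\big)$ for $0\leq j\leq N$, let $D=\sqrt{2/(N+2)}\,\operatorname{diag}\!\big(\sqrt{1-x_0^2},\ldots,\sqrt{1-x_N^2}\big)$, and let $V\in\mathbb{R}^{(N+1)\times(N-n)}$ be the matrix $V=D\,W$ where $W_{i,j}=U_{n+1+j}(x_i)$ for $0\leq i\leq N$, $0\leq j\leq N-n-1$, with $U_\ell$ the Chebyshev polynomial of the second kind of degree $\ell$. Then $V^\top$ satisfies the restricted isometry property of order $k$ with constant $\delta_k=2(n+1)k/(N+2)$, i.e. \[ (1-\delta_k)\|\underline{z}\|_2^2\leq\|V^\top\underline{z}\|_2^2\leq(1+\delta_k)\|\underline{z}\|_2^2 \] for every $\underline{z}\in\mathbb{C}^{N+1}$ with at most $k$ nonzero entries.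
   Context: $U_\ell$ is the Chebyshev polynomial of the second kind of degree $\ell$, $U_\ell(\cos\theta)=\sin((\ell+1)\theta)/\sin\theta$. $\|\cdot\|_2$ is the Euclidean norm. Note that the hypothesis gives $0<\delta_k<1$. *)

theory Defs
  imports "HOL-Analysis.Analysis"
begin

fun chebyU :: "nat \<Rightarrow> real \<Rightarrow> real" where
  "chebyU 0 x = 1"
| "chebyU (Suc 0) x = 2 * x"
| "chebyU (Suc (Suc l)) x = 2 * x * chebyU (Suc l) x - chebyU l x"

definition cheb_node :: "nat \<Rightarrow> nat \<Rightarrow> real" where
  "cheb_node N j = cos ((real N + 1 - real j) * pi / (real N + 2))"

definition Vmat :: "nat \<Rightarrow> nat \<Rightarrow> nat \<Rightarrow> nat \<Rightarrow> real" where
  "Vmat N n i j = sqrt (2 / (real N + 2)) * sqrt (1 - (cheb_node N i)\<^sup>2)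
                   * chebyU (n + 1 + j) (cheb_node N i)"

end

theory Submission imports Defs begin


lemma U_sin: "chebyU l (cos t) * sin t = sin (real (l+1) * t)"
proof (induction l rule: induct_nat_012)
  case 0 then show ?case by simp
next
  case 1 then show ?case by (simp add: sin_double)
next
  case (ge2 l)
  have a: "sin (real (l+3) * t) = sin (real (l+2) * t + t)" by (simp add: algebra_simps)
  have b: "sin (real (l+1) * t) = sin (real (l+2) * t - t)" by (simp add: algebra_simps)
  have "chebyU (Suc (Suc l)) (cos t) * sin t = 2 * cos t * (chebyU (Suc l) (cos t) * sin t) - chebyU l (cos t) * sin t"
    by (simp add: algebra_simps)
  also have "\<dots> = 2 * cos t * sin (real (l+2) * t) - sin (real (l+1) * t)"
    using ge2 by (simp add: add.commute)
  also have "\<dots> = sin (real (l+3) * t)"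
    unfolding a b sin_add sin_diff by (simp add: algebra_simps)
  finally show ?case by (simp add: add.commute)
qed

lemma cos_sum:
  fixes M q :: nat
  assumes "0 < q" "q < 2 * M"
  shows "(\<Sum>l<M. cos (real l * (real q * pi / real M))) = (1 - (-1)^q) / 2"
proof -
  define x where "x = real q * pi / real M"
  have M: "M > 0" using assms by simp
  have sx: "sin (x/2) \<noteq> 0"
  proof -
    have "0 < x/2" using assms M by (simp add: x_def)
    moreover have "x/2 < pi" using assms M by (simp add: x_def field_simps)
    ultimately have "sin (x/2) > 0" by (rule sin_gt_zero)
    then show ?thesis by simp
  qed
  define f where "f l = sin ((real l - 1/2) * x)" for l :: nat
  have t: "2 * sin (x/2) * cos (real l * x) = f (Suc l) - f l" for l
  proof -
    have a: "(real (Suc l) - 1/2) * x = real l * x + x/2" by (simp add: algebra_simps)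
    have b: "(real l - 1/2) * x = real l * x - x/2" by (simp add: algebra_simps)
    show ?thesis unfolding f_def a b sin_add sin_diff by (simp add: algebra_simps)
  qed
  have "2 * sin (x/2) * (\<Sum>l<M. cos (real l * x)) = f M - f 0"
    by (simp add: sum_distrib_left t sum_lessThan_telescope)
  also have "f M = sin (real q * pi - x/2)"
    unfolding f_def using M by (simp add: x_def field_simps)
  also have "\<dots> = - ((-1)^q) * sin (x/2)"
    by (simp add: sin_diff)
  also have "f 0 = - sin (x/2)" by (simp add: f_def)
  finally have "2 * sin (x/2) * (\<Sum>l<M. cos (real l * x)) = sin (x/2) * (1 - (-1)^q)"
    by (simp add: algebra_simps)
  then have "sin (x/2) * (2 * (\<Sum>l<M. cos (real l * x)) - (1 - (-1)^q)) = 0"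
    by (simp add: algebra_simps)
  then show ?thesis using sx unfolding x_def[symmetric]
    by simp
qed


lemma sin_orth:
  fixes M m m' :: nat
  assumes "1 \<le> m" "m < M" "1 \<le> m'" "m' < M"
  shows "(\<Sum>l<M. sin (real l * (real m * pi / real M)) * sin (real l * (real m' * pi / real M)))
         = (if m = m' then real M / 2 else 0)"
proof -
  define d where "d = (if m' \<le> m then m - m' else m' - m)"
  define s where "s = m + m'"
  have key: "sin (real l * (real m * pi / real M)) * sin (real l * (real m' * pi / real M))
     = (cos (real l * (real d * pi / real M)) - cos (real l * (real s * pi / real M))) / 2" for l
  proof -
    have e1: "cos (real l * (real d * pi / real M)) = cos (real l * (real m * pi / real M) - real l * (real m' * pi / real M))"
    proof (cases "m' \<le> m")
      case True then show ?thesis by (simp add: d_def of_nat_diff algebra_simps diff_divide_distrib)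
    next
      case False
      then have "real l * (real d * pi / real M) = - (real l * (real m * pi / real M) - real l * (real m' * pi / real M))"
        by (simp add: d_def of_nat_diff algebra_simps diff_divide_distrib)
      then show ?thesis by (simp only: cos_minus)
    qed
    have e2: "cos (real l * (real s * pi / real M)) = cos (real l * (real m * pi / real M) + real l * (real m' * pi / real M))"
      by (simp add: s_def algebra_simps add_divide_distrib)
    show ?thesis unfolding e1 e2 cos_add cos_diff by simp
  qed
  have "(\<Sum>l<M. sin (real l * (real m * pi / real M)) * sin (real l * (real m' * pi / real M)))
     = ((\<Sum>l<M. cos (real l * (real d * pi / real M))) - (\<Sum>l<M. cos (real l * (real s * pi / real M)))) / 2"
    unfolding key by (simp only: sum_divide_distrib[symmetric] sum_subtractf)
  also have "\<dots> = (if m = m' then real M / 2 else 0)"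
  proof (cases "m = m'")
    case True
    have "(\<Sum>l<M. cos (real l * (real s * pi / real M))) = (1 - (-1)^s) / 2"
      by (rule cos_sum) (use assms True in \<open>auto simp: s_def\<close>)
    moreover have "(-1::real)^s = 1" using True by (simp add: s_def flip: mult_2)
    ultimately show ?thesis using True by (simp add: d_def)
  next
    case False
    have "(\<Sum>l<M. cos (real l * (real s * pi / real M))) = (1 - (-1)^s) / 2"
      by (rule cos_sum) (use assms in \<open>auto simp: s_def\<close>)
    moreover have "(\<Sum>l<M. cos (real l * (real d * pi / real M))) = (1 - (-1)^d) / 2"
      by (rule cos_sum) (use assms False in \<open>auto simp: d_def\<close>)
    moreover have "(-1::real)^s = (-1)^d"
    proof -
      have "even s = even d" using False by (auto simp: s_def d_def)
      then show ?thesis by (simp add: minus_one_power_iff)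
    qed
    ultimately show ?thesis using False by simp
  qed
  finally show ?thesis .
qed


definition Sm :: "nat \<Rightarrow> nat \<Rightarrow> nat \<Rightarrow> real" where
  "Sm N i l = sqrt (2 / (real N + 2)) * sin (real l * (real (N + 1 - i) * pi / real (N + 2)))"

lemma Vmat_eq:
  assumes "i \<le> N"
  shows "Vmat N n i j = Sm N i (n + 2 + j)"
proof -
  define th where "th = real (N + 1 - i) * pi / real (N + 2)"
  have node: "cheb_node N i = cos th"
    unfolding cheb_node_def th_def using assms by (simp add: of_nat_diff add_ac)
  have "0 \<le> th" by (simp add: th_def)
  moreover have "th \<le> pi" using assms by (simp add: th_def field_simps)
  ultimately have "sin th \<ge> 0" by (rule sin_ge_zero)
  then have sq: "sqrt (1 - (cos th)\<^sup>2) = sin th"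
    by (simp add: sin_squared_eq[symmetric])
  show ?thesis
    unfolding Vmat_def Sm_def node sq th_def[symmetric]
    using U_sin[of "n + 1 + j" th] by (simp add: algebra_simps)
qed

lemma Sm_orth:
  assumes "i \<le> N" "i' \<le> N"
  shows "(\<Sum>l<N+2. Sm N i l * Sm N i' l) = (if i = i' then 1 else 0)"
proof -
  have "(\<Sum>l<N+2. Sm N i l * Sm N i' l) = (2 / (real N + 2)) *
     (\<Sum>l<N+2. sin (real l * (real (N + 1 - i) * pi / real (N + 2))) * sin (real l * (real (N + 1 - i') * pi / real (N + 2))))"
  proof -
    have cc: "sqrt (2 / (real N + 2)) * sqrt (2 / (real N + 2)) = 2 / (real N + 2)" by simp
    have t: "Sm N i l * Sm N i' l = (sqrt (2 / (real N + 2)) * sqrt (2 / (real N + 2))) *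
       (sin (real l * (real (N + 1 - i) * pi / real (N + 2))) * sin (real l * (real (N + 1 - i') * pi / real (N + 2))))" for l
      unfolding Sm_def by (simp only: ac_simps)
    show ?thesis unfolding sum_distrib_left t cc ..
  qed
  also have "\<dots> = (2 / (real N + 2)) * (if N + 1 - i = N + 1 - i' then real (N+2) / 2 else 0)"
    by (subst sin_orth) (use assms in auto)
  also have "\<dots> = (if i = i' then 1 else 0)" using assms by auto
  finally show ?thesis .
qed

lemma Sm_bound: "\<bar>Sm N i l\<bar> \<le> sqrt (2 / (real N + 2))"
  unfolding Sm_def abs_mult by (simp add: mult_left_le)

lemma parseval:
  fixes z :: "nat \<Rightarrow> complex"
  shows "(\<Sum>l<N+2. (cmod (\<Sum>i\<le>N. complex_of_real (Sm N i l) * z i))\<^sup>2) = (\<Sum>i\<le>N. (cmod (z i))\<^sup>2)"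
proof -
  have "complex_of_real (\<Sum>l<N+2. (cmod (\<Sum>i\<le>N. complex_of_real (Sm N i l) * z i))\<^sup>2)
     = (\<Sum>l<N+2. (\<Sum>i\<le>N. complex_of_real (Sm N i l) * z i) * (\<Sum>i'\<le>N. complex_of_real (Sm N i' l) * cnj (z i')))"
    unfolding of_real_sum complex_norm_square cnj_sum complex_cnj_mult complex_cnj_complex_of_real ..
  also have "\<dots> = (\<Sum>l<N+2. \<Sum>i\<le>N. \<Sum>i'\<le>N. complex_of_real (Sm N i l * Sm N i' l) * (z i * cnj (z i')))"
    by (simp add: sum_product algebra_simps del: sum.lessThan_Suc)
  also have "\<dots> = (\<Sum>i\<le>N. \<Sum>i'\<le>N. \<Sum>l<N+2. complex_of_real (Sm N i l * Sm N i' l) * (z i * cnj (z i')))"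
    by (subst sum.swap, rule sum.cong[OF refl], rule sum.swap)
  also have "\<dots> = (\<Sum>i\<le>N. \<Sum>i'\<le>N. complex_of_real (\<Sum>l<N+2. Sm N i l * Sm N i' l) * (z i * cnj (z i')))"
    by (simp add: sum_distrib_right del: sum.lessThan_Suc)
  also have "\<dots> = (\<Sum>i\<le>N. \<Sum>i'\<le>N. (if i = i' then z i * cnj (z i') else 0))"
    by (intro sum.cong refl, subst Sm_orth) auto
  also have "\<dots> = (\<Sum>i\<le>N. z i * cnj (z i))"
    by simp
  also have "\<dots> = complex_of_real (\<Sum>i\<le>N. (cmod (z i))\<^sup>2)"
    unfolding of_real_sum complex_norm_square ..
  finally show ?thesis by (simp only: of_real_eq_iff)
qed


lemma g_bound:
  fixes z :: "nat \<Rightarrow> complex"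
  assumes "card {i. i \<le> N \<and> z i \<noteq> 0} \<le> k"
  shows "(cmod (\<Sum>i\<le>N. complex_of_real (Sm N i l) * z i))\<^sup>2
         \<le> (2 / (real N + 2)) * real k * (\<Sum>i\<le>N. (cmod (z i))\<^sup>2)"
proof -
  define A where "A = {i. i \<le> N \<and> z i \<noteq> 0}"
  define c where "c = sqrt (2 / (real N + 2))"
  have fin: "finite A" unfolding A_def by auto
  have sub: "A \<subseteq> {..N}" unfolding A_def by auto
  have "(\<Sum>i\<le>N. complex_of_real (Sm N i l) * z i) = (\<Sum>i\<in>A. complex_of_real (Sm N i l) * z i)"
    by (rule sum.mono_neutral_right) (auto simp: A_def)
  then have "cmod (\<Sum>i\<le>N. complex_of_real (Sm N i l) * z i) \<le> (\<Sum>i\<in>A. cmod (complex_of_real (Sm N i l) * z i))"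
    by (simp add: norm_sum)
  also have "\<dots> \<le> (\<Sum>i\<in>A. c * cmod (z i))"
  proof (rule sum_mono)
    fix i assume "i \<in> A"
    have "cmod (complex_of_real (Sm N i l) * z i) = \<bar>Sm N i l\<bar> * cmod (z i)"
      by (simp add: norm_mult)
    also have "\<dots> \<le> c * cmod (z i)"
      unfolding c_def by (rule mult_right_mono[OF Sm_bound]) simp
    finally show "cmod (complex_of_real (Sm N i l) * z i) \<le> c * cmod (z i)" .
  qed
  also have "\<dots> = c * (\<Sum>i\<in>A. cmod (z i))" by (simp add: sum_distrib_left)
  finally have le1: "cmod (\<Sum>i\<le>N. complex_of_real (Sm N i l) * z i) \<le> c * (\<Sum>i\<in>A. cmod (z i))" .
  have "(cmod (\<Sum>i\<le>N. complex_of_real (Sm N i l) * z i))\<^sup>2 \<le> (c * (\<Sum>i\<in>A. cmod (z i)))\<^sup>2"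
    by (rule power_mono[OF le1]) simp
  also have "\<dots> = c\<^sup>2 * (\<Sum>i\<in>A. cmod (z i))\<^sup>2" by (simp add: power_mult_distrib)
  also have "\<dots> \<le> c\<^sup>2 * ((\<Sum>i\<in>A. (cmod (z i))\<^sup>2) * real (card A))"
    by (rule mult_left_mono[OF sum_squared_le_sum_of_squares]) simp
  also have "\<dots> \<le> c\<^sup>2 * ((\<Sum>i\<le>N. (cmod (z i))\<^sup>2) * real k)"
  proof (rule mult_left_mono[OF mult_mono])
    show "(\<Sum>i\<in>A. (cmod (z i))\<^sup>2) \<le> (\<Sum>i\<le>N. (cmod (z i))\<^sup>2)"
      by (rule sum_mono2) (use sub in auto)
    show "real (card A) \<le> real k" using assms by (simp add: A_def)
  qed (auto simp: sum_nonneg)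
  also have "\<dots> = (2 / (real N + 2)) * real k * (\<Sum>i\<le>N. (cmod (z i))\<^sup>2)"
    by (simp add: c_def)
  finally show ?thesis .
qed

lemma abstr:
  fixes T S Z d :: real
  assumes "T + S = Z" "0 \<le> S" "S \<le> d * Z" "0 \<le> d * Z"
  shows "(1 - d) * Z \<le> T \<and> T \<le> (1 + d) * Z"
  using assms by (simp add: algebra_simps)

theorem proposition2p2:
  fixes n N k :: nat and z :: "nat \<Rightarrow> complex"
  assumes "N \<ge> n" and "k \<ge> 1"
    and "real N + 2 > 2 * (real n + 1) * real k"
    and "card {i. i \<le> N \<and> z i \<noteq> 0} \<le> k"
  defines "\<delta> \<equiv> 2 * (real n + 1) * real k / (real N + 2)"
  shows "(1 - \<delta>) * (\<Sum>i\<le>N. (cmod (z i))\<^sup>2)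
           \<le> (\<Sum>j<N - n. (cmod (\<Sum>i\<le>N. complex_of_real (Vmat N n i j) * z i))\<^sup>2)
       \<and> (\<Sum>j<N - n. (cmod (\<Sum>i\<le>N. complex_of_real (Vmat N n i j) * z i))\<^sup>2)
           \<le> (1 + \<delta>) * (\<Sum>i\<le>N. (cmod (z i))\<^sup>2)"
proof -
  define g where "g l = (cmod (\<Sum>i\<le>N. complex_of_real (Sm N i l) * z i))\<^sup>2" for l
  define Z where "Z = (\<Sum>i\<le>N. (cmod (z i))\<^sup>2)"
  have Zpos: "Z \<ge> 0" unfolding Z_def by (simp add: sum_nonneg)
  have e1: "(\<Sum>j<N - n. (cmod (\<Sum>i\<le>N. complex_of_real (Vmat N n i j) * z i))\<^sup>2)
      = (\<Sum>j<N - n. g (j + (n + 2)))"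
    unfolding g_def by (intro sum.cong refl) (simp add: Vmat_eq add_ac)
  also have "\<dots> = (\<Sum>l\<in>{n+2..<N+2}. g l)"
    using sum.shift_bounds_nat_ivl[of g 0 "n+2" "N - n"] assms(1)
    by (simp add: lessThan_atLeast0)
  finally have e2: "(\<Sum>j<N - n. (cmod (\<Sum>i\<le>N. complex_of_real (Vmat N n i j) * z i))\<^sup>2)
      = (\<Sum>l\<in>{n+2..<N+2}. g l)" .
  have h1: "(\<Sum>l<N+2. g l) = (\<Sum>l\<in>{0..<n+2}. g l) + (\<Sum>l\<in>{n+2..<N+2}. g l)"
    using assms(1) by (simp add: lessThan_atLeast0 sum.atLeastLessThan_concat del: sum.lessThan_Suc sum.op_ivl_Suc)
  have h2: "(\<Sum>l<N+2. g l) = Z" unfolding g_def Z_def by (rule parseval)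
  have h3: "(\<Sum>l\<in>{0..<n+2}. g l) = g 0 + (\<Sum>l<n+1. g (Suc l))"
  proof -
    have "{0..<n+2} = {..<Suc (n+1)}" by auto
    then show ?thesis by (simp only: sum.lessThan_Suc_shift)
  qed
  have h4: "g 0 = 0" by (simp add: g_def Sm_def)
  have h5: "(\<Sum>l<n+1. g (Suc l)) \<le> real (n+1) * ((2 / (real N + 2)) * real k * Z)"
    using sum_bounded_above[of "{..<n+1}" "\<lambda>l. g (Suc l)" "(2 / (real N + 2)) * real k * Z"]
      g_bound[OF assms(4)] unfolding g_def Z_def by simp
  have h6: "real (n+1) * ((2 / (real N + 2)) * real k * Z) = \<delta> * Z"
    by (simp add: \<delta>_def field_simps)
  have h7: "(\<Sum>l<n+1. g (Suc l)) \<ge> 0" by (simp add: g_def sum_nonneg)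
  have h8: "\<delta> * Z \<ge> 0" using Zpos by (simp add: \<delta>_def)
  have h9: "(1 - \<delta>) * Z = Z - \<delta> * Z" "(1 + \<delta>) * Z = Z + \<delta> * Z" by (simp_all add: algebra_simps)
  define T where "T = (\<Sum>l\<in>{n+2..<N+2}. g l)"
  define S where "S = (\<Sum>l<n+1. g (Suc l))"
  have "T + S = Z" using h1 h2 h3 h4 unfolding T_def S_def by simp
  moreover have "S \<le> \<delta> * Z" using h5 h6 unfolding S_def by simp
  moreover have "S \<ge> 0" using h7 unfolding S_def .
  ultimately have "(1 - \<delta>) * Z \<le> T \<and> T \<le> (1 + \<delta>) * Z"
    using h8 by (intro abstr) auto
  then show ?thesis unfolding e2 Z_def[symmetric] T_def .
qed

end
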